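(* Let $G$ be a compact vector space over $\mathbb{F}_2$, $V\le\widehat G$ a finite subgroup, and $A\subset G$ measurable of density $\alpha$. Then \[ \|f_V\|_1\ \ge\ 2|V|^{-1}\{\alpha|V|\}\bigl(1-\{\alpha|V|\}\bigr). \]
   Context: $G$ is a compact Hausdorff abelian group with $x+x=0$ for all $x$; $\widehat G$ its dual, a discrete $\mathbb{F}_2$-vector space; $\mu_G$ Haar probability measure; density of $A$ is $\mu_G(A)$; $\widehat f(\gamma)=\int_G f\overline\gamma\,d\mu_G$. For finite $V\le\widehat G$, $V^\perp=\{x:\gamma(x)=1\ \forall\gamma\in V\}$, $\mu_{V^\perp}$ is Haar probability measure on $V^\perp$, and $f_V\in L^2(G)$ is defined by $\widehat{f_V}(\gamma)=0$ for $\gamma\in V$, $\widehat{f_V}(\gamma)=\widehat{\chi_A}(\gamma)$ otherwise; equivalently $f_V=\chi_A-\chi_A*\mu_{V^\perp}$ a.e. $\|\cdot\|_1$ is the $L^1(\mu_G)$ norm and $\{t\}$ the fractional part of $t$. *)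

theory Defs
  imports "HOL-Probability.Probability"
begin

text \<open>A compact vector space over F_2: a compact Hausdorff abelian topological group
  in which x + x = 0 (so negation is the identity and continuity of addition suffices).\<close>
definition compact_F2_space :: "('a::{ab_group_add,t2_space}) itself \<Rightarrow> bool" where
  "compact_F2_space _ \<longleftrightarrow> compact (UNIV :: 'a set)
     \<and> continuous_on UNIV (\<lambda>p::'a \<times> 'a. fst p + snd p)
     \<and> (\<forall>x::'a. x + x = 0)"

definition haar_prob :: "('a::{ab_group_add,topological_space}) measure \<Rightarrow> bool" where
  "haar_prob M \<longleftrightarrow> prob_space M \<and> space M = UNIV \<and> sets borel \<subseteq> sets M
     \<and> (\<forall>x B. B \<in> sets M \<longrightarrow> (\<lambda>y. x + y) ` B \<in> sets M
                 \<and> emeasure M ((\<lambda>y. x + y) ` B) = emeasure M B)"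

definition character :: "('a::{ab_group_add,topological_space} \<Rightarrow> complex) \<Rightarrow> bool" where
  "character \<gamma> \<longleftrightarrow> continuous_on UNIV \<gamma> \<and> (\<forall>x y. \<gamma> (x + y) = \<gamma> x * \<gamma> y)
     \<and> (\<forall>x. cmod (\<gamma> x) = 1)"

definition finite_dual_subgroup :: "('a::{ab_group_add,topological_space} \<Rightarrow> complex) set \<Rightarrow> bool" where
  "finite_dual_subgroup V \<longleftrightarrow> finite V \<and> (\<forall>\<gamma>\<in>V. character \<gamma>) \<and> (\<lambda>_. 1) \<in> V
     \<and> (\<forall>\<gamma>\<in>V. \<forall>\<delta>\<in>V. (\<lambda>x. \<gamma> x * \<delta> x) \<in> V)
     \<and> (\<forall>\<gamma>\<in>V. (\<lambda>x. inverse (\<gamma> x)) \<in> V)"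

definition annihilator :: "('a \<Rightarrow> complex) set \<Rightarrow> 'a set" where
  "annihilator V = {x. \<forall>\<gamma>\<in>V. \<gamma> x = 1}"

text \<open>Haar probability measure of the closed subgroup V^perp, viewed as a measure on G
  (the normalised restriction of mu_G to V^perp).\<close>
definition haar_perp :: "'a measure \<Rightarrow> ('a \<Rightarrow> complex) set \<Rightarrow> 'a measure" where
  "haar_perp M V = uniform_measure M (annihilator V)"

text \<open>f_V = chi_A - chi_A * mu_{V^perp}\<close>
definition fV :: "('a::ab_group_add) measure \<Rightarrow> ('a \<Rightarrow> complex) set \<Rightarrow> 'a set \<Rightarrow> 'a \<Rightarrow> real" where
  "fV M V A x = indicator A x - (\<integral>y. indicator A (x - y) \<partial>(haar_perp M V))"

end

theory Submission
  imports Defs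
begin

lemma meas_from_borel:
  assumes "space M = UNIV" "sets borel \<subseteq> sets M" "f \<in> measurable borel N"
  shows "f \<in> measurable M N"
  using assms unfolding measurable_def by auto

definition hfr :: "real \<Rightarrow> real" where "hfr t = frac t * (1 - frac t)"

lemma hfr_step:
  assumes "0 \<le> a" "a \<le> 1"
  shows "hfr (s + a) \<le> hfr s + a * (1 - a)"
proof (cases "a = 1")
  case True
  have "frac (s + 1) = frac s" using frac_add_of_int_right[of s 1] by simp
  then show ?thesis using True by (simp add: hfr_def)
next
  case False
  hence a1: "a < 1" using assms by simp
  have fa: "frac a = a" using assms a1 by (simp add: frac_eq)
  define t where "t = frac s"
  have t0: "0 \<le> t" "t < 1" unfolding t_def by (auto simp: frac_lt_1)
  show ?thesis
  proof (cases "t + a < 1")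
    case True
    hence "frac (s + a) = t + a" using fa by (simp add: frac_add t_def)
    moreover have "0 \<le> t * a" using t0 assms by simp
    ultimately show ?thesis unfolding hfr_def t_def[symmetric] by (simp add: algebra_simps)
  next
    case False
    hence e: "frac (s + a) = t + a - 1" using fa by (simp add: frac_add t_def)
    have "0 \<le> (1 - t) * (1 - a)" using t0 a1 by simp
    hence "(t + a - 1) * (1 - (t + a - 1)) \<le> t * (1 - t) + a * (1 - a)" by (simp add: algebra_simps)
    then show ?thesis unfolding hfr_def e t_def[symmetric] .
  qed
qed

lemma hfr_sum:
  assumes "finite S" "\<And>s. s \<in> S \<Longrightarrow> 0 \<le> b s \<and> b s \<le> 1"
  shows "hfr (\<Sum>s\<in>S. b s) \<le> (\<Sum>s\<in>S. b s * (1 - b s))"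
  using assms
proof (induction S rule: finite_induct)
  case empty
  then show ?case by (simp add: hfr_def)
next
  case (insert x F)
  have "hfr (\<Sum>s\<in>insert x F. b s) = hfr ((\<Sum>s\<in>F. b s) + b x)" using insert by (simp add: add.commute)
  also have "\<dots> \<le> hfr (\<Sum>s\<in>F. b s) + b x * (1 - b x)" using insert.prems by (intro hfr_step) auto
  also have "\<dots> \<le> (\<Sum>s\<in>F. b s * (1 - b s)) + b x * (1 - b x)" using insert by auto
  finally show ?case using insert by simp
qed

theorem lemma5p1:
  fixes M :: "('a::{ab_group_add,t2_space}) measure"
    and V :: "('a \<Rightarrow> complex) set"
    and A :: "'a set"
  assumes "compact_F2_space TYPE('a)"
    and "haar_prob M"
    and "finite_dual_subgroup V"
    and "A \<in> sets M"
  shows "(\<integral>x. \<bar>fV M V A x\<bar> \<partial>M) \<ge>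
           2 / real (card V) * frac (measure M A * real (card V))
             * (1 - frac (measure M A * real (card V)))"
proof -
  have xx: "\<And>x::'a. x + x = 0" using assms(1) unfolding compact_F2_space_def by blast
  have PS: "prob_space M" and sp: "space M = UNIV" and sb: "sets borel \<subseteq> sets M"
    and inv: "\<And>x B. B \<in> sets M \<Longrightarrow> (\<lambda>y. x + y) ` B \<in> sets M
                 \<and> emeasure M ((\<lambda>y. x + y) ` B) = emeasure M B"
    using assms(2) unfolding haar_prob_def by blast+
  interpret prob_space M by (rule PS)
  have fin: "finite V" and chr: "\<And>\<gamma>. \<gamma> \<in> V \<Longrightarrow> character \<gamma>" and one: "(\<lambda>_. 1) \<in> V"
    and mul: "\<And>\<gamma> \<delta>. \<gamma> \<in> V \<Longrightarrow> \<delta> \<in> V \<Longrightarrow> (\<lambda>x. \<gamma> x * \<delta> x) \<in> V"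
    and inverse: "\<And>\<gamma>. \<gamma> \<in> V \<Longrightarrow> (\<lambda>x. inverse (\<gamma> x)) \<in> V"
    using assms(3) unfolding finite_dual_subgroup_def by blast+
  have addsw: "\<And>x y::'a. x + (x + y) = y"
    by (metis add.assoc add_0 xx)
  have pre: "\<And>x B. (\<lambda>y::'a. x + y) -` B = (\<lambda>y. x + y) ` B"
  proof
    fix x :: 'a and B show "(\<lambda>y::'a. x + y) -` B \<subseteq> (\<lambda>y. x + y) ` B"
      using addsw by (auto intro!: image_eqI)
    show "(\<lambda>y. x + y) ` B \<subseteq> (\<lambda>y::'a. x + y) -` B" by (auto simp: addsw)
  qed
  have mtr: "\<And>x. (\<lambda>y. x + y) \<in> measurable M M"
    by (rule measurableI) (auto simp: sp pre inv)
  have dtr: "\<And>x. distr M M (\<lambda>y. x + y) = M"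
    by (rule measure_eqI) (auto simp: emeasure_distr mtr sp pre inv)
  have mtrm: "\<And>x B. B \<in> sets M \<Longrightarrow> measure M ((\<lambda>y. x + y) ` B) = measure M B"
    using inv by (simp add: measure_def)
  have gm: "\<And>\<gamma>. \<gamma> \<in> V \<Longrightarrow> \<gamma> \<in> borel_measurable M"
    using chr unfolding character_def
    by (intro meas_from_borel[OF sp sb] borel_measurable_continuous_onI) blast
  have gmul: "\<And>\<gamma> x y. \<gamma> \<in> V \<Longrightarrow> \<gamma> (x + y) = \<gamma> x * \<gamma> y"
    using chr unfolding character_def by blast
  have gnorm: "\<And>\<gamma> x. \<gamma> \<in> V \<Longrightarrow> cmod (\<gamma> x) = 1"
    using chr unfolding character_def by blast
  have gsq: "\<And>\<gamma> x. \<gamma> \<in> V \<Longrightarrow> \<gamma> x * \<gamma> x = 1"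
  proof -
    fix \<gamma> x assume g: "\<gamma> \<in> V"
    have "\<gamma> 0 = \<gamma> 0 * \<gamma> 0" using gmul[OF g, of 0 0] by simp
    moreover have "\<gamma> 0 \<noteq> 0" using gnorm[OF g, of 0] by auto
    ultimately have "\<gamma> 0 = 1" by (metis mult_cancel_left2)
    thus "\<gamma> x * \<gamma> x = 1" using gmul[OF g, of x x] xx by simp
  qed
  define n where "n = card V"
  have npos: "n > 0" unfolding n_def using fin one card_gt_0_iff by blast
  define H where "H = annihilator V"
  have Hset: "H = (\<Inter>\<gamma>\<in>V. \<gamma> -` {1} \<inter> space M)"
    unfolding H_def annihilator_def sp using one by auto
  have HM: "H \<in> sets M"
    unfolding Hset using fin one gm by (intro sets.finite_INT measurable_sets) auto
  have charsum: "\<And>x. (\<Sum>\<gamma>\<in>V. \<gamma> x) = (if x \<in> H then of_nat n else 0)"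
  proof -
    fix x
    show "(\<Sum>\<gamma>\<in>V. \<gamma> x) = (if x \<in> H then of_nat n else 0)"
    proof (cases "x \<in> H")
      case True
      hence "(\<Sum>\<gamma>\<in>V. \<gamma> x) = (\<Sum>\<gamma>\<in>V. 1)" unfolding H_def annihilator_def by (intro sum.cong) auto
      then show ?thesis using True unfolding n_def by simp
    next
      case False
      then obtain \<delta> where d: "\<delta> \<in> V" "\<delta> x \<noteq> 1" unfolding H_def annihilator_def by auto
      have dnz: "\<And>y. \<delta> y \<noteq> 0" using gnorm[OF d(1)] by (metis norm_zero zero_neq_one)
      have inj: "inj_on (\<lambda>\<gamma> y. \<delta> y * \<gamma> y) V"
        by (rule inj_onI) (auto simp: fun_eq_iff dnz)
      have img: "(\<lambda>\<gamma> y. \<delta> y * \<gamma> y) ` V = V"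
      proof
        show "(\<lambda>\<gamma> y. \<delta> y * \<gamma> y) ` V \<subseteq> V" using mul d(1) by auto
        show "V \<subseteq> (\<lambda>\<gamma> y. \<delta> y * \<gamma> y) ` V"
        proof
          fix \<gamma> assume g: "\<gamma> \<in> V"
          have m1: "(\<lambda>y. inverse (\<delta> y) * \<gamma> y) \<in> V" using mul[OF inverse[OF d(1)] g] .
          have e1: "\<gamma> = (\<lambda>y. \<delta> y * (inverse (\<delta> y) * \<gamma> y))" using dnz by (auto simp: fun_eq_iff)
          show "\<gamma> \<in> (\<lambda>\<gamma> y. \<delta> y * \<gamma> y) ` V" by (rule image_eqI[where f="\<lambda>\<gamma> y. \<delta> y * \<gamma> y", OF _ m1]) (simp add: e1[symmetric])
        qed
      qed
      have "(\<Sum>\<gamma>\<in>V. \<gamma> x) = (\<Sum>\<gamma>\<in>(\<lambda>\<gamma> y. \<delta> y * \<gamma> y) ` V. \<gamma> x)" using img by simp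
      also have "\<dots> = (\<Sum>\<gamma>\<in>V. \<delta> x * \<gamma> x)" by (subst sum.reindex[OF inj]) simp
      also have "\<dots> = \<delta> x * (\<Sum>\<gamma>\<in>V. \<gamma> x)" by (simp add: sum_distrib_left)
      finally have "(1 - \<delta> x) * (\<Sum>\<gamma>\<in>V. \<gamma> x) = 0" by (simp add: algebra_simps)
      then show ?thesis using False d(2) by simp
    qed
  qed
  have indint: "\<And>B. B \<in> sets M \<Longrightarrow> integrable M (indicator B :: 'a \<Rightarrow> real)"
    by (simp add: integrable_indicator_iff sp less_top[symmetric])
  have gint: "\<And>\<gamma>. \<gamma> \<in> V \<Longrightarrow> integrable M \<gamma>"
    using gm gnorm by (intro integrable_const_bound[where B=1]) auto
  have intchar: "\<And>\<gamma>. \<gamma> \<in> V \<Longrightarrow> (\<integral>y. \<gamma> y \<partial>M) = (if \<gamma> = (\<lambda>_. 1) then 1 else 0)"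
  proof -
    fix \<gamma> assume g: "\<gamma> \<in> V"
    show "(\<integral>y. \<gamma> y \<partial>M) = (if \<gamma> = (\<lambda>_. 1) then 1 else 0)"
    proof (cases "\<gamma> = (\<lambda>_. 1)")
      case True
      then show ?thesis by (simp add: prob_space)
    next
      case False
      then obtain x where x: "\<gamma> x \<noteq> 1" by auto
      have "(\<integral>y. \<gamma> y \<partial>M) = (\<integral>y. \<gamma> y \<partial>(distr M M (\<lambda>y. x + y)))" by (simp add: dtr)
      also have "\<dots> = (\<integral>y. \<gamma> (x + y) \<partial>M)" by (rule integral_distr[OF mtr gm[OF g]])
      also have "\<dots> = \<gamma> x * (\<integral>y. \<gamma> y \<partial>M)" by (simp add: gmul[OF g])
      finally have "(1 - \<gamma> x) * (\<integral>y. \<gamma> y \<partial>M) = 0" by (simp add: algebra_simps)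
      then show ?thesis using x False by simp
    qed
  qed
  have muH: "measure M H = 1 / real n"
  proof -
    have "(\<integral>y. (\<Sum>\<gamma>\<in>V. \<gamma> y) \<partial>M) = (\<Sum>\<gamma>\<in>V. (\<integral>y. \<gamma> y \<partial>M))"
      using Bochner_Integration.integral_sum[where I=V and M=M and f="\<lambda>\<gamma> y. \<gamma> y"] gint by simp
    also have "\<dots> = (\<Sum>\<gamma>\<in>V. if \<gamma> = (\<lambda>_. 1) then 1 else 0)" using intchar by simp
    also have "\<dots> = 1" using fin one by (simp add: sum.delta')
    finally have 1: "(\<integral>y. (\<Sum>\<gamma>\<in>V. \<gamma> y) \<partial>M) = 1" .
    have "(\<integral>y. (\<Sum>\<gamma>\<in>V. \<gamma> y) \<partial>M) = (\<integral>y. complex_of_real (real n * indicator H y) \<partial>M)"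
      by (rule Bochner_Integration.integral_cong) (auto simp: charsum)
    also have "\<dots> = complex_of_real (real n * measure M H)" using HM by (simp add: sp)
    finally have "real n * measure M H = 1" using 1 by (metis of_real_eq_1_iff)
    then show ?thesis using npos by (simp add: field_simps)
  qed
  have Hpos: "emeasure M H \<noteq> 0" using muH npos HM by (simp add: emeasure_eq_measure)
  have Hfin: "emeasure M H \<noteq> \<infinity>" by simp
  have neg: "\<And>y::'a. - y = y" using xx by (simp add: neg_eq_iff_add_eq_0)
  have dif: "\<And>x y::'a. x - y = x + y" by (metis diff_conv_add_uminus neg)
  define \<pi> where "\<pi> x = restrict (\<lambda>\<gamma>. \<gamma> x) V" for x
  define S where "S = range \<pi>"
  have pm1: "\<And>\<gamma> x. \<gamma> \<in> V \<Longrightarrow> \<gamma> x \<in> {1, -1}"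
    using gsq by (simp add: square_eq_1_iff)
  have finS: "finite S"
  proof (rule finite_subset)
    show "S \<subseteq> PiE V (\<lambda>_. {1, -1})" unfolding S_def \<pi>_def using pm1 by (auto simp only: restrict_PiE_iff image_subset_iff)
    show "finite (PiE V (\<lambda>_. {1::complex, -1}))" using fin by (intro finite_PiE) auto
  qed
  have memfib: "\<And>x y. \<pi> y = \<pi> x \<longleftrightarrow> x + y \<in> H"
  proof -
    fix x y
    have "\<pi> y = \<pi> x \<longleftrightarrow> (\<forall>\<gamma>\<in>V. \<gamma> y = \<gamma> x)"
      unfolding \<pi>_def fun_eq_iff restrict_def by (metis (full_types))
    also have "\<dots> \<longleftrightarrow> (\<forall>\<gamma>\<in>V. \<gamma> (x + y) = 1)"
    proof (intro ball_cong refl)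
      fix \<gamma> assume g: "\<gamma> \<in> V"
      have s1: "\<gamma> x * \<gamma> x = 1" using gsq[OF g] .
      show "\<gamma> y = \<gamma> x \<longleftrightarrow> \<gamma> (x + y) = 1"
      proof
        assume "\<gamma> y = \<gamma> x" thus "\<gamma> (x + y) = 1" using s1 gmul[OF g] by simp
      next
        assume "\<gamma> (x + y) = 1"
        hence "\<gamma> x * \<gamma> y = 1" using gmul[OF g] by simp
        hence "\<gamma> x * (\<gamma> x * \<gamma> y) = \<gamma> x" by simp
        thus "\<gamma> y = \<gamma> x" using s1 by (simp add: mult.assoc[symmetric])
      qed
    qed
    finally show "\<pi> y = \<pi> x \<longleftrightarrow> x + y \<in> H" unfolding H_def annihilator_def by simp
  qed
  define F where "F s = \<pi> -` {s}" for s
  have Fx: "\<And>x. F (\<pi> x) = (\<lambda>h. x + h) ` H"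
  proof -
    fix x
    have "F (\<pi> x) = (\<lambda>y. x + y) -` H" unfolding F_def using memfib by auto
    thus "F (\<pi> x) = (\<lambda>h. x + h) ` H" by (simp add: pre)
  qed
  have FM: "\<And>s. s \<in> S \<Longrightarrow> F s \<in> sets M" unfolding S_def using Fx inv HM by auto
  have muF: "\<And>s. s \<in> S \<Longrightarrow> measure M (F s) = 1 / real n" unfolding S_def using Fx mtrm HM muH by auto
  define b where "b s = measure M (A \<inter> F s) * real n" for s
  have conv: "\<And>x. (\<integral>y. indicator A (x - y) \<partial>haar_perp M V) = b (\<pi> x)"
  proof -
    fix x
    define P where "P = (\<lambda>y. x + y) -` A"
    have PM: "P \<in> sets M" unfolding P_def pre using inv assms(4) by simp
    have "(\<integral>y. indicator A (x - y) \<partial>haar_perp M V) = (\<integral>y. indicator P y \<partial>uniform_measure M H)"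
      unfolding haar_perp_def H_def[symmetric] P_def
      by (rule Bochner_Integration.integral_cong) (auto simp: dif indicator_def)
    also have "\<dots> = measure M (H \<inter> P) / measure M H"
      using Hpos Hfin PM by (simp add: sp)
    also have "H \<inter> P = (\<lambda>y. x + y) ` (A \<inter> F (\<pi> x))"
      unfolding pre[symmetric] Fx P_def by (auto simp: addsw)
    also have "measure M \<dots> = measure M (A \<inter> F (\<pi> x))"
      using FM assms(4) by (intro mtrm) (auto simp: S_def)
    finally show "(\<integral>y. indicator A (x - y) \<partial>haar_perp M V) = b (\<pi> x)"
      unfolding b_def muH by simp
  qed
  have fVeq: "\<And>x. fV M V A x = indicator A x - b (\<pi> x)"
    unfolding fV_def conv ..
  have bnd: "\<And>s. s \<in> S \<Longrightarrow> 0 \<le> b s \<and> b s \<le> 1"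
  proof -
    fix s assume s: "s \<in> S"
    have "measure M (A \<inter> F s) \<le> measure M (F s)"
      using FM[OF s] by (intro finite_measure_mono) auto
    thus "0 \<le> b s \<and> b s \<le> 1" unfolding b_def using muF[OF s] npos by (simp add: field_simps)
  qed
  define g where "g s x = (1 - b s) * indicator (A \<inter> F s) x + b s * indicator (F s - A) x" for s x
  have absq: "\<And>x. \<bar>fV M V A x\<bar> = (\<Sum>s\<in>S. g s x)"
  proof -
    fix x
    have px: "\<pi> x \<in> S" unfolding S_def by simp
    have "(\<Sum>s\<in>S. g s x) = (\<Sum>s\<in>S. if s = \<pi> x then g s x else 0)"
      by (intro sum.cong) (auto simp: g_def F_def)
    also have "\<dots> = g (\<pi> x) x" using finS px by (simp add: sum.delta')
    also have "\<dots> = \<bar>indicator A x - b (\<pi> x)\<bar>"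
      using bnd[OF px] by (auto simp: g_def F_def indicator_def)
    finally show "\<bar>fV M V A x\<bar> = (\<Sum>s\<in>S. g s x)" by (simp add: fVeq)
  qed
  have indint: "\<And>B. B \<in> sets M \<Longrightarrow> integrable M (indicator B :: 'a \<Rightarrow> real)"
    by (simp add: integrable_indicator_iff sp less_top[symmetric])
  have gint: "\<And>s. s \<in> S \<Longrightarrow> integrable M (g s)"
    unfolding g_def using FM assms(4)
    by (intro Bochner_Integration.integrable_add integrable_mult_right indint) auto
  have gval: "\<And>s. s \<in> S \<Longrightarrow> (\<integral>x. g s x \<partial>M) = 2 / real n * (b s * (1 - b s))"
  proof -
    fix s assume s: "s \<in> S"
    have i1: "integrable M (indicator (A \<inter> F s) :: 'a \<Rightarrow> real)" using FM[OF s] assms(4) by (intro indint) auto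
    have i2: "integrable M (indicator (F s - A) :: 'a \<Rightarrow> real)" using FM[OF s] assms(4) by (intro indint) auto
    have "(\<integral>x. g s x \<partial>M) = (1 - b s) * measure M (A \<inter> F s) + b s * measure M (F s - A)"
      unfolding g_def using i1 i2 by (simp add: sp)
    also have "measure M (F s - A) = 1 / real n - measure M (A \<inter> F s)"
      using finite_measure_Diff'[OF FM[OF s] assms(4)] muF[OF s] by (simp add: Int_commute)
    also have "measure M (A \<inter> F s) = b s / real n" unfolding b_def using npos by simp
    also have "(1 - b s) * (b s / real n) + b s * (1 / real n - b s / real n) = 2 / real n * (b s * (1 - b s))"
      using npos by (simp add: field_simps)
    finally show "(\<integral>x. g s x \<partial>M) = 2 / real n * (b s * (1 - b s))" .
  qed
  have sumA: "(\<Sum>s\<in>S. measure M (A \<inter> F s)) = measure M A"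
  proof -
    have "A = (\<Union>s\<in>S. A \<inter> F s)" unfolding S_def F_def by auto
    moreover have "measure M (\<Union>s\<in>S. A \<inter> F s) = (\<Sum>s\<in>S. measure M (A \<inter> F s))"
      using finS FM assms(4)
      by (intro measure_finite_Union) (auto simp: disjoint_family_on_def F_def)
    ultimately show ?thesis by simp
  qed
  have sumb: "(\<Sum>s\<in>S. b s) = measure M A * real n"
    unfolding b_def sumA[symmetric] by (simp add: sum_distrib_right)
  have "(\<integral>x. \<bar>fV M V A x\<bar> \<partial>M) = (\<integral>x. (\<Sum>s\<in>S. g s x) \<partial>M)" by (simp add: absq)
  also have "\<dots> = (\<Sum>s\<in>S. (\<integral>x. g s x \<partial>M))"
    using Bochner_Integration.integral_sum[where I=S and M=M and f=g] gint by simp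
  also have "\<dots> = 2 / real n * (\<Sum>s\<in>S. b s * (1 - b s))"
    using gval by (simp add: sum_distrib_left)
  finally have eq: "(\<integral>x. \<bar>fV M V A x\<bar> \<partial>M) = 2 / real n * (\<Sum>s\<in>S. b s * (1 - b s))" .
  have "hfr (\<Sum>s\<in>S. b s) \<le> (\<Sum>s\<in>S. b s * (1 - b s))" using finS bnd by (rule hfr_sum)
  hence "2 / real n * hfr (measure M A * real n) \<le> 2 / real n * (\<Sum>s\<in>S. b s * (1 - b s))"
    using npos unfolding sumb by (intro mult_left_mono) auto
  thus ?thesis unfolding eq n_def[symmetric] hfr_def by (simp add: mult.assoc)
qed
end
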